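(* Let $G$ be a connected edge-stable equimatchable graph with a cut vertex $v$. Then: (i) if $v$ is a weak vertex in $G$, then every vertex of $N(v)$ is a strong vertex in $G-v$; (ii) if $v$ is a strong vertex in $G$, then every vertex of $N(v)$ is a weak vertex in $G-v$, and moreover $G\setminus\{v,w\}$ is an edge-stable equimatchable graph for each $w\in N(v)$.
   Context: All graphs are finite and simple. A graph is equimatchable if all its maximal matchings have the same cardinality; an equimatchable graph $G$ is edge-stable if $G\setminus e$ (delete edge $e$, keep vertices) is equimatchable for every $e\in E(G)$. A vertex $v$ of a graph $H$ is strong in $H$ if every maximal matching of $H$ saturates $v$ (has $v$ as an endpoint of one of its edges), and weak otherwise. $G\setminus\{v,w\}$ is the subgraph induced by $V(G)\setminus\{v,w\}$. *)

theory Defs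
  imports Main
begin

definition simple_graph :: "'a set \<Rightarrow> 'a set set \<Rightarrow> bool" where
  "simple_graph V E \<longleftrightarrow> finite V \<and>
     (\<forall>e\<in>E. \<exists>u w. e = {u, w} \<and> u \<noteq> w \<and> u \<in> V \<and> w \<in> V)"

definition matching :: "'a set set \<Rightarrow> 'a set set \<Rightarrow> bool" where
  "matching E M \<longleftrightarrow> M \<subseteq> E \<and> (\<forall>e1\<in>M. \<forall>e2\<in>M. e1 \<noteq> e2 \<longrightarrow> e1 \<inter> e2 = {})"

definition maximal_matching :: "'a set set \<Rightarrow> 'a set set \<Rightarrow> bool" where
  "maximal_matching E M \<longleftrightarrow> matching E M \<and>
     (\<forall>M'. matching E M' \<and> M \<subseteq> M' \<longrightarrow> M' = M)"

definition equimatchable :: "'a set set \<Rightarrow> bool" where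
  "equimatchable E \<longleftrightarrow>
     (\<forall>M M'. maximal_matching E M \<and> maximal_matching E M' \<longrightarrow> card M = card M')"

definition edge_stable :: "'a set set \<Rightarrow> bool" where
  "edge_stable E \<longleftrightarrow> equimatchable E \<and> (\<forall>e\<in>E. equimatchable (E - {e}))"

definition strong_vertex :: "'a set set \<Rightarrow> 'a \<Rightarrow> bool" where
  "strong_vertex E v \<longleftrightarrow> (\<forall>M. maximal_matching E M \<longrightarrow> v \<in> \<Union>M)"

definition weak_vertex :: "'a set set \<Rightarrow> 'a \<Rightarrow> bool" where
  "weak_vertex E v \<longleftrightarrow> \<not> strong_vertex E v"

definition neighbours :: "'a set set \<Rightarrow> 'a \<Rightarrow> 'a set" where
  "neighbours E v = {u. {u, v} \<in> E}"

definition del_verts :: "'a set set \<Rightarrow> 'a set \<Rightarrow> 'a set set" where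
  "del_verts E S = {e \<in> E. e \<inter> S = {}}"

definition reach_rel :: "'a set \<Rightarrow> 'a set set \<Rightarrow> ('a \<times> 'a) set" where
  "reach_rel V E = {(x, y). x \<in> V \<and> y \<in> V \<and> (x, y) \<in> {(a, b). {a, b} \<in> E}\<^sup>*}"

definition components :: "'a set \<Rightarrow> 'a set set \<Rightarrow> 'a set set" where
  "components V E = V // reach_rel V E"

definition connected_graph :: "'a set \<Rightarrow> 'a set set \<Rightarrow> bool" where
  "connected_graph V E \<longleftrightarrow> card (components V E) = 1"

definition cut_vertex :: "'a set \<Rightarrow> 'a set set \<Rightarrow> 'a \<Rightarrow> bool" where
  "cut_vertex V E v \<longleftrightarrow> v \<in> V \<and>
     card (components (V - {v}) (del_verts E {v})) > card (components V E)"

end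

theory Submission
  imports Defs
begin

lemma matching_insert:
  assumes "matching E M" "f \<in> E" "\<forall>e\<in>M. e \<inter> f = {}"
  shows "matching E (insert f M)"
proof -
  have s: "M \<subseteq> E" and p: "\<forall>e1\<in>M. \<forall>e2\<in>M. e1 \<noteq> e2 \<longrightarrow> e1 \<inter> e2 = {}"
    using assms(1) by (auto simp: matching_def)
  show ?thesis unfolding matching_def
  proof (intro conjI ballI impI)
    show "insert f M \<subseteq> E" using s assms(2) by simp
    fix e1 e2 assume e1: "e1 \<in> insert f M" and e2: "e2 \<in> insert f M" and d: "e1 \<noteq> e2"
    show "e1 \<inter> e2 = {}"
    proof (cases "e1 = f")
      case True
      hence "e2 \<in> M" using e2 d by simp
      thus ?thesis using assms(3) True by (simp add: Int_commute)
    next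
      case False
      hence m1: "e1 \<in> M" using e1 by simp
      show ?thesis
      proof (cases "e2 = f")
        case True thus ?thesis using assms(3) m1 by simp
      next
        case False
        hence "e2 \<in> M" using e2 by simp
        thus ?thesis using p m1 d by simp
      qed
    qed
  qed
qed

lemma maximal_iff:
  assumes ne: "\<forall>e\<in>E. e \<noteq> {}"
  shows "maximal_matching E M \<longleftrightarrow> matching E M \<and> (\<forall>e\<in>E. e \<inter> \<Union>M \<noteq> {})"
proof
  assume m: "maximal_matching E M"
  hence mm: "matching E M" by (simp add: maximal_matching_def)
  have "e \<inter> \<Union>M \<noteq> {}" if eE: "e \<in> E" for e
  proof
    assume d: "e \<inter> \<Union>M = {}"
    have "\<forall>f\<in>M. f \<inter> e = {}" using d by auto
    hence "matching E (insert e M)" using matching_insert[OF mm eE] by simp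
    hence "insert e M = M" using m unfolding maximal_matching_def by auto
    hence "e \<in> M" by auto
    hence "e \<subseteq> \<Union>M" by auto
    hence "e = {}" using d by auto
    with ne eE show False by auto
  qed
  with mm show "matching E M \<and> (\<forall>e\<in>E. e \<inter> \<Union>M \<noteq> {})" by auto
next
  assume h: "matching E M \<and> (\<forall>e\<in>E. e \<inter> \<Union>M \<noteq> {})"
  show "maximal_matching E M" unfolding maximal_matching_def
  proof (intro conjI allI impI)
    show "matching E M" using h by simp
    fix M' assume a: "matching E M' \<and> M \<subseteq> M'"
    have sM': "M' \<subseteq> E" and pM': "\<forall>e1\<in>M'. \<forall>e2\<in>M'. e1 \<noteq> e2 \<longrightarrow> e1 \<inter> e2 = {}"
      using a by (auto simp: matching_def)
    show "M' = M"
    proof (rule ccontr)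
      assume "M' \<noteq> M"
      then obtain e where e: "e \<in> M'" "e \<notin> M" using a by auto
      hence "e \<in> E" using sM' by auto
      hence "e \<inter> \<Union>M \<noteq> {}" using h by simp
      then obtain f where f: "f \<in> M" "e \<inter> f \<noteq> {}" by auto
      have "f \<in> M'" "f \<noteq> e" using f e a by auto
      hence "e \<inter> f = {}" using pM' e(1) by auto
      thus False using f(2) by simp
    qed
  qed
qed

lemma matching_Un:
  assumes "matching E M1" "matching E M2" "\<forall>e1\<in>M1. \<forall>e2\<in>M2. e1 \<inter> e2 = {}"
  shows "matching E (M1 \<union> M2)"
proof -
  have s: "M1 \<subseteq> E" "M2 \<subseteq> E"
    and p1: "\<forall>e1\<in>M1. \<forall>e2\<in>M1. e1 \<noteq> e2 \<longrightarrow> e1 \<inter> e2 = {}"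
    and p2: "\<forall>e1\<in>M2. \<forall>e2\<in>M2. e1 \<noteq> e2 \<longrightarrow> e1 \<inter> e2 = {}"
    using assms(1,2) by (auto simp: matching_def)
  show ?thesis unfolding matching_def
  proof (intro conjI ballI impI)
    show "M1 \<union> M2 \<subseteq> E" using s by simp
    fix e1 e2 assume e1: "e1 \<in> M1 \<union> M2" and e2: "e2 \<in> M1 \<union> M2" and d: "e1 \<noteq> e2"
    show "e1 \<inter> e2 = {}"
    proof (cases "e1 \<in> M1")
      case True
      show ?thesis
      proof (cases "e2 \<in> M1")
        case True2: True thus ?thesis using p1 True d by simp
      next
        case False thus ?thesis using e2 True assms(3) by simp
      qed
    next
      case False
      hence m2: "e1 \<in> M2" using e1 by simp
      show ?thesis
      proof (cases "e2 \<in> M1")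
        case True thus ?thesis using m2 assms(3) by (metis Int_commute)
      next
        case False thus ?thesis using e2 m2 p2 d by simp
      qed
    qed
  qed
qed

lemma matching_mono:
  assumes "matching F M" "F \<subseteq> E" "M' \<subseteq> M"
  shows "matching E M'"
proof -
  have s: "M \<subseteq> F" and p: "\<forall>e1\<in>M. \<forall>e2\<in>M. e1 \<noteq> e2 \<longrightarrow> e1 \<inter> e2 = {}"
    using assms(1) by (auto simp: matching_def)
  show ?thesis unfolding matching_def
  proof (intro conjI ballI impI)
    show "M' \<subseteq> E" using s assms(2,3) by simp
    fix e1 e2 assume "e1 \<in> M'" "e2 \<in> M'" "e1 \<noteq> e2"
    thus "e1 \<inter> e2 = {}" using p assms(3) by auto
  qed
qed

lemma exists_maximal_ext:
  assumes "finite E" "matching E M0"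
  shows "\<exists>M. maximal_matching E M \<and> M0 \<subseteq> M"
proof -
  let ?S = "{M. matching E M \<and> M0 \<subseteq> M}"
  have "?S \<subseteq> Pow E" by (auto simp: matching_def)
  hence fin: "finite ?S" using assms(1) by (simp add: finite_subset)
  have "?S \<noteq> {}" using assms(2) by auto
  from finite_has_maximal[OF fin this] obtain m where
    m: "m \<in> ?S" "\<forall>b\<in>?S. m \<le> b \<longrightarrow> m = b" by auto
  have "maximal_matching E m" unfolding maximal_matching_def
  proof (intro conjI allI impI)
    show "matching E m" using m(1) by simp
    fix M' assume a: "matching E M' \<and> m \<subseteq> M'"
    hence "M' \<in> ?S" using m(1) by auto
    thus "M' = m" using m(2) a by auto
  qed
  thus ?thesis using m by auto
qed

lemma exists_maximal:
  assumes "finite E" shows "\<exists>M. maximal_matching E M"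
  using exists_maximal_ext[OF assms, of "{}"] by (auto simp: matching_def)

lemma add_edge:
  assumes ne: "\<forall>e\<in>E. e \<noteq> {}" and ab: "{a,b} \<in> E"
    and N: "maximal_matching (del_verts E {a,b}) N"
  shows "maximal_matching E (insert {a,b} N)"
proof -
  have ne': "\<forall>e\<in>del_verts E {a,b}. e \<noteq> {}" using ne by (auto simp: del_verts_def)
  have Nm: "matching (del_verts E {a,b}) N" and cov: "\<forall>e\<in>del_verts E {a,b}. e \<inter> \<Union>N \<noteq> {}"
    using N maximal_iff[OF ne'] by auto
  have sub: "N \<subseteq> del_verts E {a,b}" using Nm by (simp add: matching_def)
  have "del_verts E {a,b} \<subseteq> E" by (auto simp: del_verts_def)
  hence NmE: "matching E N" using matching_mono[OF Nm _ order_refl] by simp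
  have "\<forall>e\<in>N. e \<inter> {a,b} = {}" using sub by (auto simp: del_verts_def)
  hence m: "matching E (insert {a,b} N)" using matching_insert[OF NmE ab] by simp
  have "\<forall>e\<in>E. e \<inter> \<Union>(insert {a,b} N) \<noteq> {}"
  proof
    fix e assume eE: "e \<in> E"
    show "e \<inter> \<Union>(insert {a,b} N) \<noteq> {}"
    proof (cases "e \<inter> {a,b} = {}")
      case True
      hence "e \<in> del_verts E {a,b}" using eE by (simp add: del_verts_def)
      hence "e \<inter> \<Union>N \<noteq> {}" using cov by simp
      thus ?thesis by auto
    next
      case False thus ?thesis by auto
    qed
  qed
  thus ?thesis using m maximal_iff[OF ne] by simp
qed

lemma card_add_edge:
  assumes "finite E" "maximal_matching (del_verts E {a,b}) N"
  shows "card (insert {a,b} N) = card N + 1"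
proof -
  have sub: "N \<subseteq> del_verts E {a,b}" using assms(2) by (simp add: maximal_matching_def matching_def)
  hence "N \<subseteq> E" unfolding del_verts_def by auto
  hence "finite N" by (rule finite_subset[OF _ assms(1)])
  moreover have "{a,b} \<notin> N" using sub by (auto simp: del_verts_def)
  ultimately show ?thesis by simp
qed

lemma equiv_reach: "equiv V (reach_rel V E)"
proof -
  have s: "sym ({(a,b). {a,b} \<in> E}\<^sup>*)"
    by (rule sym_rtrancl) (auto simp: sym_def insert_commute)
  show ?thesis unfolding equiv_def refl_on_def trans_def reach_rel_def
    using s by (auto simp: sym_def intro: rtrancl_trans)
qed

lemma adj_sym:
  assumes "(a,b) \<in> {(a,b). {a,b} \<in> F}\<^sup>*" shows "(b,a) \<in> {(a,b). {a,b} \<in> F}\<^sup>*"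
proof -
  have s: "sym ({(a,b). {a,b} \<in> F}\<^sup>*)"
    by (rule sym_rtrancl) (auto simp: sym_def insert_commute)
  thus ?thesis using assms by (auto dest: symD)
qed

lemma not_v:
  assumes "(w,y) \<in> {(a,b). {a,b} \<in> del_verts E {v}}\<^sup>*" "w \<noteq> v" shows "y \<noteq> v"
  using assms by (induction rule: rtrancl_induct) (auto simp: del_verts_def)

lemma path_lemma:
  assumes "(w,z) \<in> {(a,b). {a,b} \<in> E}\<^sup>*" "w \<noteq> v"
  shows "(w,z) \<in> {(a,b). {a,b} \<in> del_verts E {v}}\<^sup>* \<or>
         (\<exists>x. {x,v} \<in> E \<and> (w,x) \<in> {(a,b). {a,b} \<in> del_verts E {v}}\<^sup>*)"
  using assms(1)
proof (induction rule: rtrancl_induct)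
  case base thus ?case by simp
next
  case (step y z)
  from step.IH show ?case
  proof
    assume wy: "(w,y) \<in> {(a,b). {a,b} \<in> del_verts E {v}}\<^sup>*"
    have yv: "y \<noteq> v" using not_v[OF wy assms(2)] .
    have yz: "{y,z} \<in> E" using step.hyps(2) by simp
    show ?case
    proof (cases "z = v")
      case True thus ?thesis using wy yz by blast
    next
      case False
      hence "{y,z} \<in> del_verts E {v}" using yz yv by (auto simp: del_verts_def)
      hence "(y,z) \<in> {(a,b). {a,b} \<in> del_verts E {v}}" by simp
      thus ?thesis using wy by (meson rtrancl.rtrancl_into_rtrancl)
    qed
  next
    assume "\<exists>x. {x,v} \<in> E \<and> (w,x) \<in> {(a,b). {a,b} \<in> del_verts E {v}}\<^sup>*"
    thus ?case by blast
  qed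
qed


lemma sg_facts:
  assumes "simple_graph V E"
  shows "finite E" "\<forall>e\<in>E. e \<noteq> {}" "\<And>a b. {a,b} \<in> E \<Longrightarrow> a \<noteq> b \<and> a \<in> V \<and> b \<in> V"
proof -
  have fV: "finite V" and ed: "\<forall>e\<in>E. \<exists>u w. e = {u, w} \<and> u \<noteq> w \<and> u \<in> V \<and> w \<in> V"
    using assms unfolding simple_graph_def by auto
  have "E \<subseteq> Pow V"
  proof
    fix e assume "e \<in> E"
    then obtain u w where "e = {u,w}" "u \<in> V" "w \<in> V" using ed by meson
    thus "e \<in> Pow V" by simp
  qed
  thus "finite E" using fV by (simp add: finite_subset)
  show "\<forall>e\<in>E. e \<noteq> {}"
  proof
    fix e assume "e \<in> E"
    then obtain u w where "e = {u,w}" using ed by meson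
    thus "e \<noteq> {}" by simp
  qed
  fix a b assume "{a,b} \<in> E"
  then obtain c d where "{a,b} = {c,d}" "c \<noteq> d" "c \<in> V" "d \<in> V"
    using ed by meson
  thus "a \<noteq> b \<and> a \<in> V \<and> b \<in> V" by (auto simp: doubleton_eq_iff)
qed

lemma other_neighbour:
  assumes sg: "simple_graph V E" and con: "connected_graph V E" and cut: "cut_vertex V E v"
    and uv: "{u,v} \<in> E"
  shows "\<exists>x. {x,v} \<in> E \<and> (u,x) \<notin> {(a,b). {a,b} \<in> del_verts E {v}}\<^sup>*"
proof -
  let ?Ev = "del_verts E {v}"
  let ?adjv = "{(a,b). {a,b} \<in> ?Ev}"
  let ?R' = "reach_rel (V - {v}) ?Ev"
  let ?R = "reach_rel V E"
  have uV: "u \<in> V - {v}" using sg_facts(3)[OF sg uv] by blast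
  have eq': "equiv (V - {v}) ?R'" by (rule equiv_reach)
  have eq: "equiv V ?R" by (rule equiv_reach)
  have c1: "card (V // ?R) = 1" using con by (simp add: connected_graph_def components_def)
  have c2: "card ((V - {v}) // ?R') > 1" using cut c1 by (simp add: cut_vertex_def components_def)
  have "\<exists>X \<in> (V - {v}) // ?R'. X \<noteq> ?R' `` {u}"
  proof (rule ccontr)
    assume "\<not> ?thesis"
    hence "(V - {v}) // ?R' \<subseteq> {?R' `` {u}}" by blast
    hence "card ((V - {v}) // ?R') \<le> card {?R' `` {u}}" by (intro card_mono) auto
    with c2 show False by simp
  qed
  then obtain w where wV: "w \<in> V - {v}" and wne: "?R' `` {w} \<noteq> ?R' `` {u}"
    by (metis quotientE)
  have nuw: "(u,w) \<notin> ?R'" using eq_equiv_class_iff[OF eq' uV wV] wne by blast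
  obtain c where c: "V // ?R = {c}" using c1 card_1_singletonE by blast
  have wV1: "w \<in> V" and uV1: "u \<in> V" using wV uV by auto
  have "?R `` {w} \<in> V // ?R" by (rule quotientI[OF wV1])
  hence a: "?R `` {w} = c" using c by simp
  have "?R `` {u} \<in> V // ?R" by (rule quotientI[OF uV1])
  hence b: "?R `` {u} = c" using c by simp
  have "(w,u) \<in> ?R" using eq_equiv_class_iff[OF eq wV1 uV1] a b by simp
  hence wu: "(w,u) \<in> {(a,b). {a,b} \<in> E}\<^sup>*" by (simp add: reach_rel_def)
  have wv: "w \<noteq> v" using wV by blast
  from path_lemma[OF wu wv] show ?thesis
  proof
    assume "(w,u) \<in> ?adjv\<^sup>*"
    hence "(u,w) \<in> ?adjv\<^sup>*" by (rule adj_sym)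
    hence "(u,w) \<in> ?R'" using uV wV by (simp add: reach_rel_def)
    with nuw show ?thesis by blast
  next
    assume "\<exists>x. {x,v} \<in> E \<and> (w,x) \<in> ?adjv\<^sup>*"
    then obtain x where x: "{x,v} \<in> E" "(w,x) \<in> ?adjv\<^sup>*" by blast
    have "(u,x) \<notin> ?adjv\<^sup>*"
    proof
      assume "(u,x) \<in> ?adjv\<^sup>*"
      moreover have "(x,w) \<in> ?adjv\<^sup>*" using x(2) by (rule adj_sym)
      ultimately have "(u,w) \<in> ?adjv\<^sup>*" by (rule rtrancl_trans)
      hence "(u,w) \<in> ?R'" using uV wV by (simp add: reach_rel_def)
      with nuw show False by blast
    qed
    thus ?thesis using x by blast
  qed
qed


lemma part_ii_a:
  assumes sg: "simple_graph V E" and eqm: "equimatchable E" and sv: "strong_vertex E v"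
    and uv: "{u,v} \<in> E"
  shows "weak_vertex (del_verts E {v}) u"
proof -
  have fin: "finite E" and ne: "\<forall>e\<in>E. e \<noteq> {}" using sg_facts[OF sg] by auto
  have vu: "{v,u} \<in> E" using uv by (simp add: insert_commute)
  have fin2: "finite (del_verts E {v,u})" using fin by (simp add: del_verts_def)
  obtain N where N: "maximal_matching (del_verts E {v,u}) N" using exists_maximal[OF fin2] by blast
  have Y: "maximal_matching E (insert {v,u} N)" by (rule add_edge[OF ne vu N])
  have cY: "card (insert {v,u} N) = card N + 1" by (rule card_add_edge[OF fin N])
  have ne2: "\<forall>e\<in>del_verts E {v,u}. e \<noteq> {}" using ne by (auto simp: del_verts_def)
  have Nm: "matching (del_verts E {v,u}) N" and Ncov: "\<forall>e\<in>del_verts E {v,u}. e \<inter> \<Union>N \<noteq> {}"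
    using N maximal_iff[OF ne2] by auto
  have Nsub: "N \<subseteq> del_verts E {v,u}" using Nm by (simp add: matching_def)
  have ne1: "\<forall>e\<in>del_verts E {v}. e \<noteq> {}" using ne by (auto simp: del_verts_def)
  show ?thesis
  proof (cases "\<forall>e\<in>del_verts E {v}. e \<inter> \<Union>N \<noteq> {}")
    case True
    have "del_verts E {v,u} \<subseteq> del_verts E {v}" by (auto simp: del_verts_def)
    hence "matching (del_verts E {v}) N" using matching_mono[OF Nm _ order_refl] by simp
    hence "maximal_matching (del_verts E {v}) N" using True maximal_iff[OF ne1] by blast
    moreover have "u \<notin> \<Union>N" using Nsub by (auto simp: del_verts_def)
    ultimately show ?thesis unfolding weak_vertex_def strong_vertex_def by blast
  next
    case False
    then obtain e where e: "e \<in> del_verts E {v}" "e \<inter> \<Union>N = {}" by blast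
    have eE: "e \<in> E" and ev: "v \<notin> e" using e by (auto simp: del_verts_def)
    have eN: "e \<notin> N" using e ne eE by blast
    have "del_verts E {v,u} \<subseteq> E" by (auto simp: del_verts_def)
    hence mE: "matching E N" using matching_mono[OF Nm _ order_refl] by simp
    have "matching E (insert e N)"
      by (rule matching_insert[OF mE eE]) (use e in blast)
    then obtain Z where Z: "maximal_matching E Z" "insert e N \<subseteq> Z"
      using exists_maximal_ext[OF fin] by blast
    have "Z \<subseteq> E" using Z(1) by (simp add: maximal_matching_def matching_def)
    hence finZ: "finite Z" using fin by (simp add: finite_subset)
    have "N \<subseteq> E" using Nsub by (auto simp: del_verts_def)
    hence finN: "finite N" using fin by (simp add: finite_subset)
    have "card Z = card (insert {v,u} N)" using eqm Z(1) Y unfolding equimatchable_def by blast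
    also have "\<dots> = card (insert e N)" using cY eN finN by simp
    finally have "Z = insert e N" using card_subset_eq[OF finZ Z(2)] by simp
    hence "v \<notin> \<Union>Z" using ev Nsub by (auto simp: del_verts_def)
    thus ?thesis using sv Z(1) unfolding strong_vertex_def by blast
  qed
qed

lemma part_ii_b:
  assumes sg: "simple_graph V E" and es: "edge_stable E" and wv: "{w,v} \<in> E"
  shows "edge_stable (del_verts E {v,w})"
proof -
  have fin: "finite E" and ne: "\<forall>e\<in>E. e \<noteq> {}" using sg_facts[OF sg] by auto
  have vw: "{v,w} \<in> E" using wv by (simp add: insert_commute)
  have gen: "card N1 = card N2"
    if E'sub: "E' \<subseteq> E" and vwE': "{v,w} \<in> E'" and eqE': "equimatchable E'"
      and N1: "maximal_matching (del_verts E' {v,w}) N1"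
      and N2: "maximal_matching (del_verts E' {v,w}) N2" for E' N1 N2
  proof -
    have ne': "\<forall>e\<in>E'. e \<noteq> {}" using ne E'sub by blast
    have fin': "finite E'" using fin E'sub finite_subset by blast
    have "card (insert {v,w} N1) = card (insert {v,w} N2)"
      using eqE' add_edge[OF ne' vwE' N1] add_edge[OF ne' vwE' N2]
      unfolding equimatchable_def by blast
    thus ?thesis using card_add_edge[OF fin' N1] card_add_edge[OF fin' N2] by simp
  qed
  have eqE: "equimatchable E" using es by (simp add: edge_stable_def)
  have "equimatchable (del_verts E {v,w})"
    unfolding equimatchable_def using gen[OF order_refl vw eqE] by blast
  moreover have "equimatchable (del_verts E {v,w} - {e})" if e: "e \<in> del_verts E {v,w}" for e
  proof -
    have eE: "e \<in> E" and ed: "e \<inter> {v,w} = {}" using e by (auto simp: del_verts_def)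
    have eq1: "equimatchable (E - {e})" using es eE by (simp add: edge_stable_def)
    have vw1: "{v,w} \<in> E - {e}" using vw ed by auto
    have dd: "del_verts E {v,w} - {e} = del_verts (E - {e}) {v,w}" by (auto simp: del_verts_def)
    show ?thesis unfolding equimatchable_def dd using gen[OF _ vw1 eq1] by blast
  qed
  ultimately show ?thesis by (simp add: edge_stable_def)
qed



lemma part_i:
  assumes sg: "simple_graph V E" and con: "connected_graph V E" and eqm: "equimatchable E"
    and cut: "cut_vertex V E v" and wk: "weak_vertex E v" and uv: "{u,v} \<in> E"
  shows "strong_vertex (del_verts E {v}) u"
proof (rule ccontr)
  assume nsu: "\<not> strong_vertex (del_verts E {v}) u"
  have fin: "finite E" and ne: "\<forall>e\<in>E. e \<noteq> {}" using sg_facts[OF sg] by auto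
  define Ev where "Ev = del_verts E {v}"
  define A where "A = {z. (u,z) \<in> {(a,b). {a,b} \<in> Ev}\<^sup>*}"
  obtain x where xv: "{x,v} \<in> E" and xA0: "(u,x) \<notin> {(a,b). {a,b} \<in> Ev}\<^sup>*"
    using other_neighbour[OF sg con cut uv] unfolding Ev_def by blast
  have xA: "x \<notin> A" using xA0 by (simp add: A_def)
  have uA: "u \<in> A" by (simp add: A_def)
  have uvne: "u \<noteq> v" using sg_facts(3)[OF sg uv] by blast
  have vA: "v \<notin> A" using not_v[of u _ E v] uvne unfolding A_def Ev_def by blast
  have EvE: "Ev \<subseteq> E" by (auto simp: Ev_def del_verts_def)
  have Evv: "v \<notin> e" if "e \<in> Ev" for e using that by (auto simp: Ev_def del_verts_def)
  have clos: "e \<subseteq> A" if "e \<in> Ev" "e \<inter> A \<noteq> {}" for e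
  proof -
    have ed: "\<forall>e\<in>E. \<exists>a b. e = {a, b} \<and> a \<noteq> b \<and> a \<in> V \<and> b \<in> V"
      using sg unfolding simple_graph_def by auto
    have "e \<in> E" using that(1) EvE by auto
    then obtain a b where ab: "e = {a,b}" using ed by meson
    have "{a,b} \<in> Ev" "{b,a} \<in> Ev" using that(1) ab by (auto simp: insert_commute)
    hence "(a,b) \<in> {(a,b). {a,b} \<in> Ev}" "(b,a) \<in> {(a,b). {a,b} \<in> Ev}" by auto
    hence "a \<in> A \<Longrightarrow> b \<in> A" "b \<in> A \<Longrightarrow> a \<in> A" unfolding A_def
      by (auto intro: rtrancl_into_rtrancl)
    thus ?thesis using that(2) ab by blast
  qed
  have dich: "e \<subseteq> A \<or> e \<inter> A = {}" if "e \<in> Ev" for e using clos[OF that] by blast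
  have neEv: "\<forall>e\<in>Ev. e \<noteq> {}" using ne EvE by blast
  obtain M0 where M0: "maximal_matching E M0" "v \<notin> \<Union>M0"
    using wk unfolding weak_vertex_def strong_vertex_def by blast
  obtain P where P: "maximal_matching Ev P" "u \<notin> \<Union>P"
    using nsu unfolding strong_vertex_def Ev_def by blast
  have M0m: "matching E M0" and M0c: "\<forall>e\<in>E. e \<inter> \<Union>M0 \<noteq> {}"
    using M0(1) maximal_iff[OF ne] by auto
  have Pm: "matching Ev P" and Pc: "\<forall>e\<in>Ev. e \<inter> \<Union>P \<noteq> {}"
    using P(1) maximal_iff[OF neEv] by auto
  have "M0 \<subseteq> E" using M0m by (simp add: matching_def)
  hence M0Ev: "M0 \<subseteq> Ev" using M0(2) by (auto simp: Ev_def del_verts_def)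
  have PEv: "P \<subseteq> Ev" using Pm by (simp add: matching_def)
  define F where "F = del_verts E (A \<union> {v,x})"
  have finF: "finite F" using fin by (simp add: F_def del_verts_def)
  obtain T where T: "maximal_matching F T" using exists_maximal[OF finF] by blast
  have FE: "F \<subseteq> E" by (auto simp: F_def del_verts_def)
  have neF: "\<forall>e\<in>F. e \<noteq> {}" using ne FE by blast
  have Tm: "matching F T" and Tc: "\<forall>e\<in>F. e \<inter> \<Union>T \<noteq> {}"
    using T maximal_iff[OF neF] by auto
  have TF: "T \<subseteq> F" using Tm by (simp add: matching_def)
  have Tdisj: "e \<inter> (A \<union> {v,x}) = {}" if "e \<in> T" for e using TF that by (auto simp: F_def del_verts_def)
  define inP where "inP = {e\<in>P. e \<subseteq> A}"
  define inM where "inM = {e\<in>M0. e \<subseteq> A}"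
  define outM where "outM = {e\<in>M0. \<not> e \<subseteq> A}"
  have inPm: "matching E inP" using matching_mono[OF Pm EvE] by (auto simp: inP_def)
  have inMm: "matching E inM" using matching_mono[OF M0m order_refl] by (auto simp: inM_def)
  have outMm: "matching E outM" using matching_mono[OF M0m order_refl] by (auto simp: outM_def)
  have TmE: "matching E T" using matching_mono[OF Tm FE order_refl] .
  have outMdisj: "e \<inter> A = {}" if "e \<in> outM" for e using that dich M0Ev by (auto simp: outM_def)
  have vx: "{v,x} \<in> E" using xv by (simp add: insert_commute)
  have vu: "{v,u} \<in> E" using uv by (simp add: insert_commute)
  have covA: "e \<inter> \<Union>inP \<noteq> {}" if "e \<in> Ev" "e \<inter> A \<noteq> {}" for e
  proof -
    have eA: "e \<subseteq> A" using clos that by blast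
    have "e \<inter> \<Union>P \<noteq> {}" using Pc that(1) by auto
    then obtain f where f: "f \<in> P" "e \<inter> f \<noteq> {}" by blast
    have "f \<inter> A \<noteq> {}" using f(2) eA by blast
    have "f \<in> Ev" using PEv f(1) by auto
    hence "f \<subseteq> A" using clos \<open>f \<inter> A \<noteq> {}\<close> by simp
    hence "f \<in> inP" using f(1) by (simp add: inP_def)
    thus ?thesis using f(2) by blast
  qed
  have covAM: "e \<inter> \<Union>inM \<noteq> {}" if "e \<in> Ev" "e \<inter> A \<noteq> {}" for e
  proof -
    have eA: "e \<subseteq> A" using clos that by blast
    have "e \<inter> \<Union>M0 \<noteq> {}" using M0c that(1) EvE by auto
    then obtain f where f: "f \<in> M0" "e \<inter> f \<noteq> {}" by blast
    have "f \<inter> A \<noteq> {}" using f(2) eA by blast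
    have "f \<in> Ev" using M0Ev f(1) by auto
    hence "f \<subseteq> A" using clos \<open>f \<inter> A \<noteq> {}\<close> by simp
    hence "f \<in> inM" using f(1) by (simp add: inM_def)
    thus ?thesis using f(2) by blast
  qed
  have covT: "e \<inter> \<Union>T \<noteq> {}" if "e \<in> E" "v \<notin> e" "x \<notin> e" "e \<inter> A = {}" for e
  proof -
    have "e \<in> F" using that by (auto simp: F_def del_verts_def)
    thus ?thesis using Tc by simp
  qed
  have inEv: "e \<in> Ev" if "e \<in> E" "v \<notin> e" for e using that by (auto simp: Ev_def del_verts_def)
  have X1: "maximal_matching E (insert {v,x} (inP \<union> T))"
  proof -
    have "matching E (inP \<union> T)"
      by (rule matching_Un[OF inPm TmE]) (use Tdisj in \<open>auto simp: inP_def\<close>)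
    hence "matching E (insert {v,x} (inP \<union> T))"
      by (rule matching_insert[OF _ vx]) (use Tdisj vA xA in \<open>auto simp: inP_def\<close>)
    moreover have "\<forall>e\<in>E. e \<inter> \<Union>(insert {v,x} (inP \<union> T)) \<noteq> {}"
    proof
      fix e assume eE: "e \<in> E"
      show "e \<inter> \<Union>(insert {v,x} (inP \<union> T)) \<noteq> {}"
      proof (cases "v \<in> e \<or> x \<in> e")
        case True thus ?thesis by blast
      next
        case False
        hence ev: "e \<in> Ev" using inEv eE by blast
        show ?thesis
        proof (cases "e \<inter> A = {}")
          case True thus ?thesis using covT[OF eE] False by blast
        next
          case False thus ?thesis using covA[OF ev] by blast
        qed
      qed
    qed
    ultimately show ?thesis using maximal_iff[OF ne] by blast
  qed
  have X2: "maximal_matching E (insert {v,x} (inM \<union> T))"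
  proof -
    have "matching E (inM \<union> T)"
      by (rule matching_Un[OF inMm TmE]) (use Tdisj in \<open>auto simp: inM_def\<close>)
    hence "matching E (insert {v,x} (inM \<union> T))"
      by (rule matching_insert[OF _ vx]) (use Tdisj vA xA in \<open>auto simp: inM_def\<close>)
    moreover have "\<forall>e\<in>E. e \<inter> \<Union>(insert {v,x} (inM \<union> T)) \<noteq> {}"
    proof
      fix e assume eE: "e \<in> E"
      show "e \<inter> \<Union>(insert {v,x} (inM \<union> T)) \<noteq> {}"
      proof (cases "v \<in> e \<or> x \<in> e")
        case True thus ?thesis by blast
      next
        case False
        hence ev: "e \<in> Ev" using inEv eE by blast
        show ?thesis
        proof (cases "e \<inter> A = {}")
          case True thus ?thesis using covT[OF eE] False by blast
        next
          case False thus ?thesis using covAM[OF ev] by blast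
        qed
      qed
    qed
    ultimately show ?thesis using maximal_iff[OF ne] by blast
  qed
  have Y: "maximal_matching E (insert {v,u} (inP \<union> outM))"
  proof -
    have "matching E (inP \<union> outM)"
      by (rule matching_Un[OF inPm outMm]) (use outMdisj in \<open>auto simp: inP_def\<close>)
    moreover have "\<forall>e\<in>inP \<union> outM. e \<inter> {v,u} = {}"
    proof
      fix e assume e: "e \<in> inP \<union> outM"
      show "e \<inter> {v,u} = {}"
      proof (cases "e \<in> inP")
        case True
        hence "e \<in> Ev" "e \<in> P" using PEv by (auto simp: inP_def)
        thus ?thesis using Evv P(2) by blast
      next
        case False
        hence "e \<in> outM" using e by blast
        moreover hence "e \<in> Ev" using M0Ev by (auto simp: outM_def)
        ultimately show ?thesis using Evv outMdisj uA by blast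
      qed
    qed
    ultimately have "matching E (insert {v,u} (inP \<union> outM))"
      by (rule matching_insert[OF _ vu])
    moreover have "\<forall>e\<in>E. e \<inter> \<Union>(insert {v,u} (inP \<union> outM)) \<noteq> {}"
    proof
      fix e assume eE: "e \<in> E"
      show "e \<inter> \<Union>(insert {v,u} (inP \<union> outM)) \<noteq> {}"
      proof (cases "v \<in> e")
        case True thus ?thesis by blast
      next
        case False
        hence ev: "e \<in> Ev" using inEv eE by blast
        show ?thesis
        proof (cases "e \<inter> A = {}")
          case True
          obtain f where f: "f \<in> M0" "e \<inter> f \<noteq> {}" using M0c eE by blast
          have "\<not> f \<subseteq> A" using f(2) True by blast
          hence "f \<in> outM" using f(1) by (simp add: outM_def)
          thus ?thesis using f(2) by blast
        next
          case False thus ?thesis using covA[OF ev] by blast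
        qed
      qed
    qed
    ultimately show ?thesis using maximal_iff[OF ne] by blast
  qed
  have "inP \<subseteq> E" using PEv EvE by (auto simp: inP_def)
  hence finP: "finite inP" using fin by (simp add: finite_subset)
  have "M0 \<subseteq> E" using M0m by (simp add: matching_def)
  hence finM: "finite M0" using fin by (simp add: finite_subset)
  have finIM: "finite inM" "finite outM" using finM by (auto simp: inM_def outM_def)
  have "T \<subseteq> E" using TF FE by auto
  hence finT: "finite T" using fin by (simp add: finite_subset)
  have d1: "inP \<inter> T = {}"
  proof (rule ccontr)
    assume "inP \<inter> T \<noteq> {}"
    then obtain e where "e \<in> inP" "e \<in> T" by blast
    hence "e \<subseteq> A" "e \<inter> A = {}" "e \<in> E" using Tdisj TF FE by (auto simp: inP_def)
    thus False using ne by blast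
  qed
  have d2: "inM \<inter> T = {}"
  proof (rule ccontr)
    assume "inM \<inter> T \<noteq> {}"
    then obtain e where "e \<in> inM" "e \<in> T" by blast
    hence "e \<subseteq> A" "e \<inter> A = {}" "e \<in> E" using Tdisj TF FE by (auto simp: inM_def)
    thus False using ne by blast
  qed
  have n1: "{v,x} \<notin> inP \<union> T" using vA Tdisj by (auto simp: inP_def)
  have n2: "{v,x} \<notin> inM \<union> T" using vA Tdisj by (auto simp: inM_def)
  have n3: "{v,u} \<notin> inP \<union> outM"
  proof
    assume "{v,u} \<in> inP \<union> outM"
    hence "{v,u} \<in> Ev" using PEv M0Ev by (auto simp: inP_def outM_def)
    thus False using Evv by blast
  qed
  have cX1: "card (insert {v,x} (inP \<union> T)) = card inP + card T + 1"
    using n1 finP finT d1 by (simp add: card_Un_disjoint)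
  have cX2: "card (insert {v,x} (inM \<union> T)) = card inM + card T + 1"
    using n2 finIM finT d2 by (simp add: card_Un_disjoint)
  have d3: "inP \<inter> outM = {}" by (auto simp: inP_def outM_def)
  have cY: "card (insert {v,u} (inP \<union> outM)) = card inP + card outM + 1"
    using n3 finP finIM d3 by (simp add: card_Un_disjoint)
  have M0split: "M0 = inM \<union> outM" "inM \<inter> outM = {}" by (auto simp: inM_def outM_def)
  have cM: "card M0 = card inM + card outM"
    using M0split finIM by (simp add: card_Un_disjoint)
  have e1: "card (insert {v,x} (inP \<union> T)) = card (insert {v,x} (inM \<union> T))"
    using eqm X1 X2 unfolding equimatchable_def by blast
  have e2: "card (insert {v,u} (inP \<union> outM)) = card M0"
    using eqm Y M0(1) unfolding equimatchable_def by blast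
  show False using e1 e2 cX1 cX2 cY cM by simp
qed

theorem lemma4p4:
  fixes V :: "'a set" and E :: "'a set set" and v :: 'a
  assumes "simple_graph V E"
    and "connected_graph V E"
    and "edge_stable E"
    and "cut_vertex V E v"
  shows "(weak_vertex E v \<longrightarrow>
            (\<forall>u\<in>neighbours E v. strong_vertex (del_verts E {v}) u))
       \<and> (strong_vertex E v \<longrightarrow>
            (\<forall>u\<in>neighbours E v. weak_vertex (del_verts E {v}) u)
            \<and> (\<forall>w\<in>neighbours E v. edge_stable (del_verts E {v, w})))"
proof -
  have eqm: "equimatchable E" using assms(3) by (simp add: edge_stable_def)
  show ?thesis
    using part_i[OF assms(1,2) eqm assms(4)] part_ii_a[OF assms(1) eqm]
      part_ii_b[OF assms(1,3)]
    by (simp add: neighbours_def)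
qed

end
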